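(* Let $0<\sigma_0<s$ and $\sigma_1=-\log(1-\sigma_0/s)$, and assume $s+\sigma_1\le1$. Then for every $f\in\mathcal{A}(\mathrm{T}^n_{s+\sigma_1})$, $$|f|_s^2\le|f|_{s-\sigma_0}|f|_{s+\sigma_1}.$$
   Context: $\mathbb{T}^n_s=\{\theta\in\mathbb{C}^n/2\pi\mathbb{Z}^n:|\mathrm{Im}\,\theta_j|\le s\ \forall j\}$, $\mathbb{D}^n_s=\{r\in\mathbb{C}^n:|r_j|\le s\ \forall j\}$, $\mathrm{T}^n_s=\mathbb{T}^n_s\times\mathbb{D}^n_s$. $\mathcal{A}(\mathrm{T}^n_s)$ is the space of continuous complex functions on $\mathrm{T}^n_s$ analytic in its interior, and $|f|_s=\sup_{\mathrm{T}^n_s}|f|$. *)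

theory Defs
  imports "HOL-Analysis.Analysis"
begin

text \<open>Points of C^n x C^n; the angle part theta is taken in C^n, and functions on
  the quotient C^n / 2 pi Z^n are represented as 2 pi-periodic functions in each theta_j.\<close>

definition Tdom :: "real \<Rightarrow> ((complex^'n) \<times> (complex^'n)) set" where
  "Tdom s = {(\<theta>, r). (\<forall>j. \<bar>Im (\<theta> $ j)\<bar> \<le> s) \<and> (\<forall>j. cmod (r $ j) \<le> s)}"

definition holo_several ::
  "((complex^'n) \<times> (complex^'n) \<Rightarrow> complex) \<Rightarrow> ((complex^'n) \<times> (complex^'n)) set \<Rightarrow> bool" where
  "holo_several f S \<longleftrightarrow>
     (\<forall>z\<in>S. \<exists>D. (f has_derivative D) (at z) \<and>
        (\<forall>v. D (\<i> *s fst v, \<i> *s snd v) = \<i> * D v))"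

definition angle_periodic ::
  "((complex^'n) \<times> (complex^'n) \<Rightarrow> complex) \<Rightarrow> ((complex^'n) \<times> (complex^'n)) set \<Rightarrow> bool" where
  "angle_periodic f S \<longleftrightarrow>
     (\<forall>\<theta> r j. (\<theta>, r) \<in> S \<longrightarrow> f (\<theta> + axis j (complex_of_real (2 * pi)), r) = f (\<theta>, r))"

definition A_space :: "real \<Rightarrow> ((complex^'n) \<times> (complex^'n) \<Rightarrow> complex) set" where
  "A_space s = {f. continuous_on (Tdom s) f \<and> holo_several f (interior (Tdom s))
                   \<and> angle_periodic f (Tdom s)}"

definition supnorm :: "real \<Rightarrow> ((complex^'n) \<times> (complex^'n) \<Rightarrow> complex) \<Rightarrow> real" where
  "supnorm s f = (SUP z\<in>Tdom s. cmod (f z))"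

end

theory Submission
  imports Defs "HOL-Complex_Analysis.Conformal_Mappings"
begin


lemma Tdom_shift:
  assumes "(\<theta>, r) \<in> Tdom T" "\<forall>i. Im (v $ i) = 0"
  shows "(\<theta> + v, r) \<in> Tdom T"
  using assms by (auto simp: Tdom_def)

lemma per_nat:
  assumes ap: "angle_periodic f (Tdom T)" and m: "(\<theta>, r) \<in> Tdom T"
  shows "f (\<theta> + axis j (of_nat k * complex_of_real (2*pi)), r) = f (\<theta>, r)"
proof (induction k)
  case 0
  have "\<theta> + axis j (of_nat 0 * complex_of_real (2*pi)) = \<theta>" by (simp add: vec_eq_iff axis_def)
  then show ?case by (simp only:)
next
  case (Suc k)
  let ?t = "\<theta> + axis j (of_nat k * complex_of_real (2*pi))"
  have "?t + axis j (complex_of_real (2*pi)) = \<theta> + axis j (of_nat (Suc k) * complex_of_real (2*pi))"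
    by (simp add: vec_eq_iff axis_def algebra_simps)
  moreover have "(?t, r) \<in> Tdom T" by (rule Tdom_shift[OF m]) (simp add: axis_def)
  ultimately show ?case using ap Suc unfolding angle_periodic_def by metis
qed

lemma per_int:
  assumes ap: "angle_periodic f (Tdom T)" and m: "(\<theta>, r) \<in> Tdom T"
  shows "f (\<theta> + axis j (of_int k * complex_of_real (2*pi)), r) = f (\<theta>, r)"
proof (cases "k \<ge> 0")
  case True
  then obtain n where "k = int n" by (metis nonneg_eq_int)
  then show ?thesis using per_nat[OF ap m] by simp
next
  case False
  then obtain n where n: "k = - int n" by (metis neg_int_cases  less_le not_le)
  let ?t = "\<theta> + axis j (of_int k * complex_of_real (2*pi))"
  have "(?t, r) \<in> Tdom T" by (rule Tdom_shift[OF m]) (simp add: axis_def)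
  have eq: "?t + axis j (of_nat n * complex_of_real (2*pi)) = \<theta>"
    by (simp add: n vec_eq_iff axis_def)
  have "f (\<theta>, r) = f (?t, r)" using per_nat[OF ap \<open>(?t, r) \<in> Tdom T\<close>, of j n] by (simp only: eq)
  then show ?thesis by (rule sym)
qed

lemma per_set:
  assumes ap: "angle_periodic f (Tdom T)" and J: "finite J"
  shows "\<forall>\<theta>. (\<theta>, r) \<in> Tdom T \<longrightarrow>
     f (\<theta> + (\<chi> i. if i \<in> J then of_int (k i) * complex_of_real (2*pi) else 0), r) = f (\<theta>, r)"
  using J
proof (induction J rule: finite_induct)
  case empty
  show ?case
  proof (intro allI impI)
    fix \<theta> :: "complex^'a"
    have "\<theta> + (\<chi> i. if i \<in> {} then of_int (k i) * complex_of_real (2*pi) else 0) = \<theta>"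
      by (simp add: vec_eq_iff)
    then show "f (\<theta> + (\<chi> i. if i \<in> {} then of_int (k i) * complex_of_real (2*pi) else 0), r) = f (\<theta>, r)" by simp
  qed
next
  case (insert j J)
  show ?case
  proof (intro allI impI)
    fix \<theta> assume m: "(\<theta>, r) \<in> Tdom T"
    let ?t = "\<theta> + (\<chi> i. if i \<in> J then of_int (k i) * complex_of_real (2*pi) else 0)"
    have m2: "(?t, r) \<in> Tdom T" by (rule Tdom_shift[OF m]) simp
    have "\<theta> + (\<chi> i. if i \<in> insert j J then of_int (k i) * complex_of_real (2*pi) else 0)
       = ?t + axis j (of_int (k j) * complex_of_real (2*pi))"
      using insert(2) by (auto simp: vec_eq_iff axis_def)
    then have "f (\<theta> + (\<chi> i. if i \<in> insert j J then of_int (k i) * complex_of_real (2*pi) else 0), r)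
        = f (?t + axis j (of_int (k j) * complex_of_real (2*pi)), r)" by (simp only:)
    also have "\<dots> = f (?t, r)" by (rule per_int[OF ap m2])
    also have "\<dots> = f (\<theta>, r)" using insert(3) m by blast
    finally show "f (\<theta> + (\<chi> i. if i \<in> insert j J then of_int (k i) * complex_of_real (2*pi) else 0), r) = f (\<theta>, r)" .
  qed
qed



lemma Tdom_alt: "Tdom T = {z. \<forall>j. \<bar>Im (fst z $ j)\<bar> \<le> T \<and> cmod (snd z $ j) \<le> T}"
  by (auto simp: Tdom_def)

lemma closed_Tdom: "closed (Tdom T)"
  unfolding Tdom_alt
  by (intro closed_Collect_all closed_Collect_conj closed_Collect_le continuous_intros)

lemma norm_vec_bound:
  fixes x :: "complex^'n"
  assumes "\<And>i. cmod (x $ i) \<le> c"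
  shows "norm x \<le> real CARD('n) * c"
proof -
  have "norm x = L2_set (\<lambda>i. norm (x $ i)) UNIV" by (simp add: norm_vec_def)
  also have "\<dots> \<le> (\<Sum>i\<in>UNIV. norm (x $ i))" by (rule L2_set_le_sum) simp
  also have "\<dots> \<le> (\<Sum>i\<in>(UNIV::'n set). c)" by (rule sum_mono) (use assms in auto)
  finally show ?thesis by simp
qed

lemma A_bounded:
  fixes f :: "(complex^'n) \<times> (complex^'n) \<Rightarrow> complex"
  assumes "f \<in> A_space T"
  shows "\<exists>B. \<forall>z\<in>Tdom T. cmod (f z) \<le> B"
proof -
  have cont: "continuous_on (Tdom T) f" and ap: "angle_periodic f (Tdom T)"
    using assms by (auto simp: A_space_def)
  define K :: "((complex^'n) \<times> (complex^'n)) set" where "K = {z. (\<forall>j. 0 \<le> Re (fst z $ j) \<and> Re (fst z $ j) \<le> 2*pi)} \<inter> Tdom T"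
  have KT: "K \<subseteq> Tdom T" by (auto simp: K_def)
  have "closed K" unfolding K_def
    by (intro closed_Int closed_Tdom closed_Collect_all closed_Collect_conj closed_Collect_le continuous_intros)
  moreover have "bounded K"
  proof -
    have "norm z \<le> 2 * (real CARD('n) * (2*pi + \<bar>T\<bar>))" if "z \<in> K" for z :: "(complex^'n) \<times> (complex^'n)"
    proof -
      have a: "cmod (fst z $ i) \<le> 2*pi + \<bar>T\<bar>" for i
      proof -
        have "cmod (fst z $ i) \<le> \<bar>Re (fst z $ i)\<bar> + \<bar>Im (fst z $ i)\<bar>" by (rule cmod_le)
        moreover have "\<bar>Re (fst z $ i)\<bar> \<le> 2*pi" "\<bar>Im (fst z $ i)\<bar> \<le> \<bar>T\<bar>"
          using that by (auto simp: K_def Tdom_alt) (meson abs_ge_self order.trans)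
        ultimately show ?thesis by linarith
      qed
      have b: "cmod (snd z $ i) \<le> 2*pi + \<bar>T\<bar>" for i
        using that pi_gt_zero by (auto simp: K_def Tdom_alt) (smt (verit) pi_gt_zero)
      have "norm z \<le> norm (fst z) + norm (snd z)" using norm_Pair_le[of "fst z" "snd z"] by simp
      also have "\<dots> \<le> real CARD('n) * (2*pi + \<bar>T\<bar>) + real CARD('n) * (2*pi + \<bar>T\<bar>)"
        by (intro add_mono norm_vec_bound a b)
      finally show ?thesis by simp
    qed
    then show ?thesis unfolding bounded_iff by blast
  qed
  ultimately have "compact K" by (simp add: compact_eq_bounded_closed)
  then have "compact (f ` K)" by (rule compact_continuous_image[OF continuous_on_subset[OF cont KT]])
  then obtain B where B: "\<forall>y\<in>f ` K. norm y \<le> B" using compact_imp_bounded bounded_iff by metis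
  show ?thesis
  proof (intro exI ballI)
    fix z :: "(complex^'n) \<times> (complex^'n)" assume z: "z \<in> Tdom T"
    obtain \<theta> r :: "complex^'n" where zr: "z = (\<theta>, r)" by (cases z)
    define k :: "'n \<Rightarrow> int" where "k i = - \<lfloor>Re (\<theta> $ i) / (2*pi)\<rfloor>" for i
    define \<theta>' :: "complex^'n" where "\<theta>' = \<theta> + (\<chi> i. if i \<in> UNIV then of_int (k i) * complex_of_real (2*pi) else 0)"
    have fe: "f (\<theta>', r) = f (\<theta>, r)"
      using per_set[OF ap finite_class.finite_UNIV, of r k] z zr unfolding \<theta>'_def by blast
    have "(\<theta>', r) \<in> Tdom T" unfolding \<theta>'_def by (rule Tdom_shift) (use z zr in auto)
    moreover have "0 \<le> Re (\<theta>' $ j) \<and> Re (\<theta>' $ j) \<le> 2*pi" for j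
    proof -
      let ?x = "Re (\<theta> $ j) / (2*pi)"
      have "of_int \<lfloor>?x\<rfloor> \<le> ?x" "?x < of_int \<lfloor>?x\<rfloor> + 1" by linarith+
      have "2*pi * of_int \<lfloor>?x\<rfloor> \<le> 2*pi*?x"
        using \<open>of_int \<lfloor>?x\<rfloor> \<le> ?x\<close> pi_gt_zero by (intro mult_left_mono) auto
      moreover have "2*pi*?x < 2*pi * (of_int \<lfloor>?x\<rfloor> + 1)"
        using \<open>?x < of_int \<lfloor>?x\<rfloor> + 1\<close> pi_gt_zero by (intro mult_strict_left_mono) auto
      moreover have "2*pi*?x = Re (\<theta> $ j)" by simp
      ultimately have "2*pi * of_int \<lfloor>?x\<rfloor> \<le> Re (\<theta> $ j)" "Re (\<theta> $ j) < 2*pi * (of_int \<lfloor>?x\<rfloor> + 1)"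
        by linarith+
      moreover have "Re (\<theta>' $ j) = Re (\<theta> $ j) - 2*pi * of_int \<lfloor>?x\<rfloor>"
        by (simp add: \<theta>'_def k_def)
      ultimately show ?thesis by (simp add: algebra_simps)
    qed
    ultimately have "(\<theta>', r) \<in> K" by (auto simp: K_def)
    then show "cmod (f z) \<le> B" using B fe zr by force
  qed
qed



lemma strip_max:
  fixes h :: "complex \<Rightarrow> complex"
  assumes d: "0 < d"
    and cont: "continuous_on {u. \<bar>Re u\<bar> \<le> d} h"
    and hol: "h holomorphic_on {u. \<bar>Re u\<bar> < d}"
    and bnd: "\<And>u. \<bar>Re u\<bar> \<le> d \<Longrightarrow> cmod (h u) \<le> B"
    and bd: "\<And>u. \<bar>Re u\<bar> = d \<Longrightarrow> cmod (h u) \<le> K"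
  shows "cmod (h 0) \<le> K"
proof -
  have K0: "0 \<le> K" using bd[of "complex_of_real d"] d by (smt (verit) Re_complex_of_real norm_ge_zero)
  have main: "cmod (h 0) \<le> K * exp (\<epsilon> * d\<^sup>2) + \<epsilon>" if e: "\<epsilon> > 0" for \<epsilon>
  proof -
    define C where "C = max 1 B"
    have C1: "C \<ge> 1" "B \<le> C" by (auto simp: C_def)
    define Y where "Y = sqrt ((\<bar>ln (C/\<epsilon>)\<bar> + \<epsilon>*d\<^sup>2)/\<epsilon>)"
    have nn: "0 \<le> (\<bar>ln (C/\<epsilon>)\<bar> + \<epsilon>*d\<^sup>2)/\<epsilon>"
      using e by (intro divide_nonneg_pos add_nonneg_nonneg mult_nonneg_nonneg) auto
    have Y2: "Y\<^sup>2 = (\<bar>ln (C/\<epsilon>)\<bar> + \<epsilon>*d\<^sup>2)/\<epsilon>" using nn by (simp add: Y_def)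
    have Y0: "Y \<ge> 0" using nn by (simp add: Y_def)
    define k where "k u = h u * exp (complex_of_real \<epsilon> * u\<^sup>2)" for u
    have nk: "cmod (k u) = cmod (h u) * exp (\<epsilon> * ((Re u)\<^sup>2 - (Im u)\<^sup>2))" for u
      by (simp add: k_def norm_mult norm_exp_eq_Re Re_power2)
    define S where "S = cbox (Complex (-d) (-Y)) (Complex d Y)"
    have "cmod (k 0) \<le> K * exp (\<epsilon> * d\<^sup>2) + \<epsilon>"
    proof (rule maximum_modulus_frontier[of k S])
      have "interior S \<subseteq> {u. \<bar>Re u\<bar> < d}"
        by (auto simp: S_def interior_cbox in_box_complex_iff)
      then show "k holomorphic_on interior S"
        unfolding k_def by (intro holomorphic_intros holomorphic_on_subset[OF hol])
      have "closure S \<subseteq> {u. \<bar>Re u\<bar> \<le> d}"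
        by (auto simp: S_def in_cbox_complex_iff)
      then show "continuous_on (closure S) k"
        unfolding k_def by (intro continuous_intros continuous_on_subset[OF cont])
      show "bounded S" by (simp add: S_def)
      show "0 \<in> S" using d Y0 by (simp add: S_def in_cbox_complex_iff)
      fix z assume "z \<in> frontier S"
      then have z: "\<bar>Re z\<bar> \<le> d" "\<bar>Im z\<bar> \<le> Y" "\<bar>Re z\<bar> = d \<or> \<bar>Im z\<bar> = Y"
        by (auto simp: S_def frontier_cbox in_box_complex_iff in_cbox_complex_iff)
      have hz: "cmod (h z) \<le> B" using bnd z(1) .
      have Re2: "(Re z)\<^sup>2 \<le> d\<^sup>2" using z(1) d by (simp add: abs_le_square_iff[symmetric])
      from z(3) show "cmod (k z) \<le> K * exp (\<epsilon> * d\<^sup>2) + \<epsilon>"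
      proof
        assume a: "\<bar>Re z\<bar> = d"
        have "(Re z)\<^sup>2 = d\<^sup>2" using a by (metis power2_abs)
        then have "exp (\<epsilon> * ((Re z)\<^sup>2 - (Im z)\<^sup>2)) \<le> exp (\<epsilon> * d\<^sup>2)"
          using e by (simp add: mult_left_mono)
        then have "cmod (k z) \<le> K * exp (\<epsilon> * d\<^sup>2)"
          unfolding nk using bd[OF a] K0 by (intro mult_mono) auto
        then show ?thesis using e by linarith
      next
        assume a: "\<bar>Im z\<bar> = Y"
        have "(Im z)\<^sup>2 = Y\<^sup>2" using a by (metis power2_abs)
        then have "\<epsilon> * ((Re z)\<^sup>2 - (Im z)\<^sup>2) \<le> \<epsilon> * d\<^sup>2 - \<epsilon> * Y\<^sup>2"
          using e Re2 by (simp add: algebra_simps mult_left_mono)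
        also have "\<epsilon> * Y\<^sup>2 = \<bar>ln (C/\<epsilon>)\<bar> + \<epsilon>*d\<^sup>2" using e Y2 by simp
        also have "\<epsilon> * d\<^sup>2 - (\<bar>ln (C/\<epsilon>)\<bar> + \<epsilon>*d\<^sup>2) \<le> ln (\<epsilon>/C)"
          using e C1 by (simp add: ln_div)
        finally have "exp (\<epsilon> * ((Re z)\<^sup>2 - (Im z)\<^sup>2)) \<le> \<epsilon>/C"
          using e C1 by (metis exp_le_cancel_iff exp_ln divide_pos_pos less_le_trans zero_less_one)
        then have "cmod (k z) \<le> C * (\<epsilon>/C)"
          unfolding nk using hz C1 by (intro mult_mono) auto
        also have "\<dots> = \<epsilon>" using C1 by simp
        finally show ?thesis using K0 by (smt (verit) exp_gt_zero mult_nonneg_nonneg)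
      qed
    qed
    then show ?thesis by (simp add: k_def)
  qed
  have lim: "((\<lambda>\<epsilon>. K * exp (\<epsilon> * d\<^sup>2) + \<epsilon>) \<longlongrightarrow> K * exp (0 * d\<^sup>2) + 0) (at_right 0)"
    by (intro tendsto_intros)
  show ?thesis
  proof (rule tendsto_le[OF _ lim[simplified] tendsto_const])
    show "at_right (0::real) \<noteq> bot" by simp
    show "\<forall>\<^sub>F x in at_right 0. cmod (h 0) \<le> K * exp (x * d\<^sup>2) + x"
      using eventually_at_right_less[of 0] by eventually_elim (rule main)
  qed
qed


lemma arith_facts:
  fixes s \<sigma>0 \<sigma>1 :: real
  assumes "0 < \<sigma>0" and "\<sigma>0 < s"
    and s1: "\<sigma>1 = - ln (1 - \<sigma>0 / s)"
    and "s + \<sigma>1 \<le> 1"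
  shows "\<sigma>0 \<le> \<sigma>1" "s * exp (- \<sigma>1) = s - \<sigma>0" "s * exp \<sigma>1 \<le> s + \<sigma>1"
proof -
  have q: "0 < \<sigma>0 / s" "\<sigma>0 / s < 1" using assms by auto
  have "ln (1 + (- (\<sigma>0 / s))) \<le> - (\<sigma>0 / s)" using q by (intro ln_add_one_self_le_self2) auto
  then have "\<sigma>0 / s \<le> \<sigma>1" using s1 by simp
  moreover have "\<sigma>0 \<le> \<sigma>0 / s"
  proof -
    have "s \<le> 1" using assms \<open>\<sigma>0 / s \<le> \<sigma>1\<close> q by linarith
    then show ?thesis using assms by (simp add: le_divide_eq)
  qed
  ultimately show "\<sigma>0 \<le> \<sigma>1" by linarith
  have e: "exp (- \<sigma>1) = 1 - \<sigma>0 / s" using s1 q by simp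
  then show "s * exp (- \<sigma>1) = s - \<sigma>0" using assms by (simp add: field_simps)
  have p1: "0 < \<sigma>1" using \<open>\<sigma>0 / s \<le> \<sigma>1\<close> q by linarith
  have p2: "\<sigma>1 < 1" using assms p1 by linarith
  have "1 - \<sigma>1 \<le> exp (- \<sigma>1)" using exp_ge_add_one_self[of "- \<sigma>1"] by simp
  then have "exp \<sigma>1 * (1 - \<sigma>1) \<le> exp \<sigma>1 * exp (- \<sigma>1)" by (intro mult_left_mono) auto
  then have a: "exp \<sigma>1 * (1 - \<sigma>1) \<le> 1" by (simp add: exp_minus field_simps)
  have b: "s \<le> (s + \<sigma>1) * (1 - \<sigma>1)"
  proof -
    have "(s + \<sigma>1) * (1 - \<sigma>1) = s + \<sigma>1 * (1 - s - \<sigma>1)" by (simp add: algebra_simps)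
    moreover have "0 \<le> \<sigma>1 * (1 - s - \<sigma>1)" using p1 assms(4) by (intro mult_nonneg_nonneg) auto
    ultimately show ?thesis by linarith
  qed
  have "s * exp \<sigma>1 * (1 - \<sigma>1) \<le> s" using a assms by (simp add: mult.assoc mult_left_le)
  also have "\<dots> \<le> (s + \<sigma>1) * (1 - \<sigma>1)" by (rule b)
  finally show "s * exp \<sigma>1 \<le> s + \<sigma>1" using p2 by (simp add: mult_le_cancel_right)
qed


lemma sR2: "r *\<^sub>R (z::complex) = of_real r * z" by (simp add: scaleR_conv_of_real)

lemma cplx_lin:
  fixes D :: "(complex^'n) \<times> (complex^'n) \<Rightarrow> complex"
  assumes "linear D" and "\<forall>v. D (\<i> *s fst v, \<i> *s snd v) = \<i> * D v"
  shows "D (c *s P, c *s Q) = c * D (P,Q)"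
proof -
  have c: "c = of_real (Re c) + \<i> * of_real (Im c)" by (simp add: complex_eq_iff)
  have e: "(c *s P, c *s Q) = Re c *\<^sub>R (P,Q) + Im c *\<^sub>R (\<i> *s P, \<i> *s Q)"
    apply (rule prod_eqI)
    by (simp_all add: vec_eq_iff sR2 algebra_simps, (subst c, simp add: algebra_simps)+)
  have "D (c *s P, c *s Q) = Re c *\<^sub>R D (P,Q) + Im c *\<^sub>R D (\<i> *s P, \<i> *s Q)"
    unfolding e by (simp only: linear_add[OF assms(1)] linear_scale[OF assms(1)])
  also have "\<dots> = Re c *\<^sub>R D (P,Q) + Im c *\<^sub>R (\<i> * D (P, Q))"
    using assms(2)[rule_format, of "(P,Q)"] by simp
  also have "\<dots> = c * D (P,Q)"
    by (subst (3) c) (simp add: sR2 algebra_simps)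
  finally show ?thesis .
qed

lemma bl_smult: "bounded_linear (\<lambda>u::complex. (a * u) *s (B::complex^'n))"
proof -
  have "linear (\<lambda>u::complex. (a * u) *s (B::complex^'n))"
    by (rule linearI) (auto simp: vec_eq_iff algebra_simps sR2)
  then show ?thesis by (simp add: linear_conv_bounded_linear)
qed

lemma Tdom_mono: "t \<le> t' \<Longrightarrow> Tdom t \<subseteq> Tdom t'"
  by (auto simp: Tdom_def) (meson order.trans)+

lemma open_core: "open {z::(complex^'n)\<times>(complex^'n). \<forall>j. \<bar>Im (fst z $ j)\<bar> < T \<and> cmod (snd z $ j) < T}"
proof -
  have e: "{z::(complex^'n)\<times>(complex^'n). \<forall>j. \<bar>Im (fst z $ j)\<bar> < T \<and> cmod (snd z $ j) < T}
     = (\<Inter>j\<in>UNIV. {z. \<bar>Im (fst z $ j)\<bar> < T} \<inter> {z. cmod (snd z $ j) < T})" by auto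
  show ?thesis unfolding e
    by (intro open_INT finite_class.finite_UNIV ballI open_Int open_Collect_less continuous_intros)
qed

lemma core_interior: "{z::(complex^'n)\<times>(complex^'n). \<forall>j. \<bar>Im (fst z $ j)\<bar> < T \<and> cmod (snd z $ j) < T}
   \<subseteq> interior (Tdom T)"
  by (rule interior_maximal[OF _ open_core]) (auto simp: Tdom_def less_imp_le)

theorem corollary2:
  fixes f :: "(complex^'n) \<times> (complex^'n) \<Rightarrow> complex"
    and s \<sigma>0 \<sigma>1 :: real
  assumes "0 < \<sigma>0" and "\<sigma>0 < s"
    and "\<sigma>1 = - ln (1 - \<sigma>0 / s)"
    and "s + \<sigma>1 \<le> 1"
    and "f \<in> A_space (s + \<sigma>1)"
  shows "(supnorm s f)\<^sup>2 \<le> supnorm (s - \<sigma>0) f * supnorm (s + \<sigma>1) f"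
proof -
  note af = arith_facts[OF assms(1-4)]
  define T where "T = s + \<sigma>1"
  define a where "a = s - \<sigma>0"
  define lam where "lam = \<sigma>1 / \<sigma>0"
  have s0: "0 < s" and a0: "0 < a" using assms by (auto simp: a_def)
  have s0T: "s + \<sigma>0 \<le> T" using af(1) by (simp add: T_def)
  have aT: "a \<le> T" using af(1) assms(1,2) by (simp add: T_def a_def)
  have s10: "0 < \<sigma>1" using af(1) assms(1) by linarith
  have lam0: "0 < lam" using s10 assms(1) by (simp add: lam_def)
  have lams: "lam * \<sigma>0 = \<sigma>1" using assms(1) by (simp add: lam_def)
  have fA: "f \<in> A_space T" using assms(5) by (simp add: T_def)
  have contf: "continuous_on (Tdom T) f" and holf: "holo_several f (interior (Tdom T))"
    using fA by (auto simp: A_space_def)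
  obtain Bf where Bf: "\<forall>z\<in>Tdom T. cmod (f z) \<le> Bf" using A_bounded[OF fA] by blast
  have supge: "cmod (f z) \<le> supnorm t f" if "z \<in> Tdom t" "t \<le> T" for z t
    unfolding supnorm_def
  proof (rule cSUP_upper[OF that(1)])
    show "bdd_above ((\<lambda>z. cmod (f z)) ` Tdom t)"
      using Bf Tdom_mono[OF that(2)] by (auto intro!: bdd_aboveI[of _ Bf])
  qed
  define Ma where "Ma = supnorm a f"
  define Mc where "Mc = supnorm T f"
  have zero_in: "(0, 0) \<in> Tdom t" if "0 \<le> t" for t :: real
    using that by (simp add: Tdom_def)
  have Ma0: "0 \<le> Ma" unfolding Ma_def
    using supge[OF zero_in[of a] aT] a0 by (meson norm_ge_zero order.trans less_imp_le)
  have Mc0: "0 \<le> Mc" unfolding Mc_def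
    using supge[OF zero_in[of T] order.refl] a0 aT by (meson norm_ge_zero order.trans less_imp_le)
  have key: "(cmod (f p))\<^sup>2 \<le> Ma * Mc" if p: "p \<in> Tdom s" for p
  proof -
    obtain \<theta>0 r0 :: "complex^'n" where pe: "p = (\<theta>0, r0)" by (cases p)
    have th0: "\<bar>Im (\<theta>0 $ j)\<bar> \<le> s" and r00: "cmod (r0 $ j) \<le> s" for j
      using p pe by (auto simp: Tdom_def)
    define R :: "complex^'n" where "R = (\<chi> j. complex_of_real (Re (\<theta>0 $ j)))"
    define Bv :: "complex^'n" where "Bv = (\<chi> j. complex_of_real (Im (\<theta>0 $ j) / s))"
    define \<gamma> :: "complex \<Rightarrow> (complex^'n) \<times> (complex^'n)" where "\<gamma> u = (R + (\<i> * u) *s Bv, exp (of_real lam * (u - of_real s)) *s r0)" for u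
    define g :: "complex \<Rightarrow> complex" where "g u = f (\<gamma> u)" for u
    have imf: "Im (fst (\<gamma> u) $ j) = Re u * (Im (\<theta>0 $ j) / s)" for u j
      by (simp add: \<gamma>_def R_def Bv_def)
    have nsn: "cmod (snd (\<gamma> u) $ j) = exp (lam * (Re u - s)) * cmod (r0 $ j)" for u j
      by (simp add: \<gamma>_def norm_mult norm_exp_eq_Re)
    have imb: "\<bar>Im (fst (\<gamma> u) $ j)\<bar> \<le> Re u" if "0 \<le> Re u" for u j
    proof -
      have "\<bar>Im (\<theta>0 $ j) / s\<bar> \<le> 1" using th0[of j] s0 by simp
      then have "Re u * \<bar>Im (\<theta>0 $ j) / s\<bar> \<le> Re u * 1" using that by (intro mult_left_mono)
      then show ?thesis unfolding imf abs_mult using that by simp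
    qed
    have snb: "cmod (snd (\<gamma> u) $ j) \<le> exp (lam * (Re u - s)) * s" for u j
      unfolding nsn by (intro mult_left_mono r00) auto
    have mem: "\<gamma> u \<in> Tdom T" if "a \<le> Re u" "Re u \<le> s + \<sigma>0" for u
    proof -
      have e1: "lam * (Re u - s) \<le> lam * \<sigma>0"
        using that lam0 by (intro mult_left_mono) auto
      have "exp (lam * (Re u - s)) * s \<le> exp \<sigma>1 * s"
        using e1 lams s0 by (intro mult_right_mono) auto
      then have "exp (lam * (Re u - s)) * s \<le> T" using af(3) by (simp add: T_def mult.commute)
      moreover have "Re u \<le> T" using that s0T by simp
      ultimately have "\<bar>Im (fst (\<gamma> u) $ j)\<bar> \<le> T \<and> cmod (snd (\<gamma> u) $ j) \<le> T" for j
        using imb[of u j] snb[of u j] that a0 by linarith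
      then show ?thesis by (simp add: Tdom_alt)
    qed
    have mema: "\<gamma> u \<in> Tdom a" if "Re u = a" for u
    proof -
      have "exp (lam * (Re u - s)) * s = a"
        using that lams af(2) by (simp add: a_def mult.commute)
      then have "\<bar>Im (fst (\<gamma> u) $ j)\<bar> \<le> a \<and> cmod (snd (\<gamma> u) $ j) \<le> a" for j
        using imb[of u j] snb[of u j] that a0 by linarith
      then show ?thesis by (simp add: Tdom_alt)
    qed
    have memi: "\<gamma> u \<in> interior (Tdom T)" if "a < Re u" "Re u < s + \<sigma>0" for u
    proof -
      have e1: "lam * (Re u - s) < lam * \<sigma>0"
        using that lam0 by (intro mult_strict_left_mono) auto
      have "exp (lam * (Re u - s)) * s < exp \<sigma>1 * s"
        using e1 lams s0 by (intro mult_strict_right_mono) auto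
      then have "exp (lam * (Re u - s)) * s < T" using af(3) by (simp add: T_def mult.commute)
      moreover have "Re u < T" using that s0T by simp
      ultimately have "\<gamma> u \<in> {z. \<forall>j. \<bar>Im (fst z $ j)\<bar> < T \<and> cmod (snd z $ j) < T}"
        using imb[of u] snb[of u] that a0 by (smt (verit) mem_Collect_eq)
      then show ?thesis using core_interior by blast
    qed
    define \<phi>' :: "complex \<Rightarrow> complex" where "\<phi>' u = of_real lam * exp (of_real lam * (u - of_real s))" for u
    have d\<gamma>: "(\<gamma> has_derivative (\<lambda>v. ((\<i> * v) *s Bv, (1 * (\<phi>' u * v)) *s r0))) (at u)" for u
    proof -
      have d1: "((\<lambda>u. R + (\<i> * u) *s Bv) has_derivative (\<lambda>v. (\<i> * v) *s Bv)) (at u)"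
        using has_derivative_add[OF has_derivative_const bounded_linear_imp_has_derivative[OF bl_smult[of \<i> Bv]]]
        by simp
      have "((\<lambda>u. exp (of_real lam * (u - of_real s))) has_field_derivative \<phi>' u) (at u)"
        unfolding \<phi>'_def by (auto intro!: derivative_eq_intros)
      then have d2a: "((\<lambda>u. exp (of_real lam * (u - of_real s))) has_derivative (\<lambda>v. \<phi>' u * v)) (at u)"
        by (simp add: has_field_derivative_def)
      have d2: "((\<lambda>u. exp (of_real lam * (u - of_real s)) *s r0) has_derivative (\<lambda>v. (1 * (\<phi>' u * v)) *s r0)) (at u)"
        using has_derivative_compose[OF d2a bounded_linear_imp_has_derivative[OF bl_smult[of 1 r0]]]
        by simp
      show ?thesis unfolding \<gamma>_def by (rule has_derivative_Pair[OF d1 d2])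
    qed
    have gcont: "continuous_on {u. a \<le> Re u \<and> Re u \<le> s + \<sigma>0} g"
    proof -
      have "continuous (at u) \<gamma>" for u by (rule has_derivative_continuous[OF d\<gamma>])
      then have "continuous_on {u. a \<le> Re u \<and> Re u \<le> s + \<sigma>0} \<gamma>"
        by (intro continuous_at_imp_continuous_on ballI)
      moreover have "\<gamma> ` {u. a \<le> Re u \<and> Re u \<le> s + \<sigma>0} \<subseteq> Tdom T" using mem by blast
      ultimately show ?thesis unfolding g_def
        by (rule continuous_on_compose2[OF contf])
    qed
    have ghol: "g holomorphic_on {u. a < Re u \<and> Re u < s + \<sigma>0}"
      unfolding holomorphic_on_def
    proof
      fix u assume "u \<in> {u. a < Re u \<and> Re u < s + \<sigma>0}"
      then have "\<gamma> u \<in> interior (Tdom T)" using memi by auto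
      then obtain D where D: "(f has_derivative D) (at (\<gamma> u))"
          and Di: "\<forall>v. D (\<i> *s fst v, \<i> *s snd v) = \<i> * D v"
        using holf unfolding holo_several_def by blast
      have lD: "linear D" using has_derivative_bounded_linear[OF D] bounded_linear.linear by blast
      have "((f \<circ> \<gamma>) has_derivative (D \<circ> (\<lambda>v. ((\<i> * v) *s Bv, (1 * (\<phi>' u * v)) *s r0)))) (at u)"
        by (rule diff_chain_at[OF d\<gamma> D])
      moreover have "(D \<circ> (\<lambda>v. ((\<i> * v) *s Bv, (1 * (\<phi>' u * v)) *s r0)))
          = (*) (D (\<i> *s Bv, \<phi>' u *s r0))"
      proof
        fix v
        have e: "((\<i> * v) *s Bv, (1 * (\<phi>' u * v)) *s r0) = (v *s (\<i> *s Bv), v *s (\<phi>' u *s r0))"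
          by (simp add: vec_eq_iff mult_ac)
        show "(D \<circ> (\<lambda>v. ((\<i> * v) *s Bv, (1 * (\<phi>' u * v)) *s r0))) v = D (\<i> *s Bv, \<phi>' u *s r0) * v"
          unfolding comp_apply e cplx_lin[OF lD Di] by (rule mult.commute)
      qed
      ultimately have "(g has_field_derivative (D (\<i> *s Bv, \<phi>' u *s r0))) (at u)"
        by (simp add: has_field_derivative_def g_def[abs_def] comp_def)
      then show "g field_differentiable at u within {u. a < Re u \<and> Re u < s + \<sigma>0}"
        using field_differentiable_def has_field_derivative_at_within by blast
    qed
    have gs: "g (of_real s) = f p"
    proof -
      have "\<gamma> (of_real s) = (\<theta>0, r0)"
        using s0 by (simp add: \<gamma>_def R_def Bv_def vec_eq_iff complex_eq_iff)
      then show ?thesis by (simp add: g_def pe)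
    qed
    define h :: "complex \<Rightarrow> complex" where "h u = g (of_real s + u) * g (of_real s - u)" for u
    have "cmod (h 0) \<le> Ma * Mc"
    proof (rule strip_max[of \<sigma>0 h "Bf * Bf"])
      show "0 < \<sigma>0" by (rule assms(1))
      have i1: "(\<lambda>u. of_real s + u) ` {u. \<bar>Re u\<bar> \<le> \<sigma>0} \<subseteq> {u. a \<le> Re u \<and> Re u \<le> s + \<sigma>0}"
        by (auto simp: a_def)
      have i2: "(\<lambda>u. of_real s - u) ` {u. \<bar>Re u\<bar> \<le> \<sigma>0} \<subseteq> {u. a \<le> Re u \<and> Re u \<le> s + \<sigma>0}"
        by (auto simp: a_def)
      show "continuous_on {u. \<bar>Re u\<bar> \<le> \<sigma>0} h" unfolding h_def
        by (intro continuous_on_mult continuous_on_compose2[OF gcont _ i1]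
            continuous_on_compose2[OF gcont _ i2] continuous_intros)
      have j1: "(\<lambda>u. of_real s + u) ` {u. \<bar>Re u\<bar> < \<sigma>0} \<subseteq> {u. a < Re u \<and> Re u < s + \<sigma>0}"
        by (auto simp: a_def)
      have j2: "(\<lambda>u. of_real s - u) ` {u. \<bar>Re u\<bar> < \<sigma>0} \<subseteq> {u. a < Re u \<and> Re u < s + \<sigma>0}"
        by (auto simp: a_def)
      have h1: "(g \<circ> (\<lambda>u. of_real s + u)) holomorphic_on {u. \<bar>Re u\<bar> < \<sigma>0}"
        by (rule holomorphic_on_compose_gen[OF _ ghol j1]) (intro holomorphic_intros)
      have h2: "(g \<circ> (\<lambda>u. of_real s - u)) holomorphic_on {u. \<bar>Re u\<bar> < \<sigma>0}"
        by (rule holomorphic_on_compose_gen[OF _ ghol j2]) (intro holomorphic_intros)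
      show "h holomorphic_on {u. \<bar>Re u\<bar> < \<sigma>0}"
        using holomorphic_on_mult[OF h1 h2] by (simp add: h_def[abs_def] comp_def)
      show "cmod (h u) \<le> Bf * Bf" if "\<bar>Re u\<bar> \<le> \<sigma>0" for u
      proof -
        have "cmod (g (of_real s + u)) \<le> Bf" "cmod (g (of_real s - u)) \<le> Bf"
          using Bf mem that by (auto simp: g_def a_def)
        then show ?thesis unfolding h_def norm_mult by (intro mult_mono) (auto intro: order.trans[OF norm_ge_zero])
      qed
      show "cmod (h u) \<le> Ma * Mc" if "\<bar>Re u\<bar> = \<sigma>0" for u
      proof -
        have A: "cmod (g w) \<le> Ma" if "Re w = a" for w
          unfolding g_def Ma_def using supge[OF mema[OF that] aT] .
        have C: "cmod (g w) \<le> Mc" if "Re w = s + \<sigma>0" for w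
          unfolding g_def Mc_def using supge[OF mem order.refl] that assms by (simp add: a_def)
        from that have "Re u = \<sigma>0 \<or> Re u = - \<sigma>0" by linarith
        then show ?thesis
        proof
          assume r: "Re u = \<sigma>0"
          have "cmod (g (of_real s + u)) \<le> Mc" "cmod (g (of_real s - u)) \<le> Ma"
            using r by (auto intro!: A C simp: a_def)
          then show ?thesis unfolding h_def norm_mult using Ma0 Mc0
            by (metis mult.commute mult_mono norm_ge_zero)
        next
          assume r: "Re u = - \<sigma>0"
          have "cmod (g (of_real s + u)) \<le> Ma" "cmod (g (of_real s - u)) \<le> Mc"
            using r by (auto intro!: A C simp: a_def)
          then show ?thesis unfolding h_def norm_mult using Ma0 Mc0
            by (intro mult_mono) auto
        qed
      qed
    qed
    then show ?thesis by (simp add: h_def gs norm_mult power2_eq_square)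
  qed
  have ne: "Tdom s \<noteq> ({} :: ((complex^'n) \<times> (complex^'n)) set)" using zero_in[of s] s0 by auto
  have "supnorm s f \<le> sqrt (Ma * Mc)"
    unfolding supnorm_def
  proof (rule cSUP_least[OF ne])
    fix z :: "(complex^'n) \<times> (complex^'n)" assume "z \<in> Tdom s"
    then show "cmod (f z) \<le> sqrt (Ma * Mc)" using key by (simp add: real_le_rsqrt)
  qed
  moreover have "0 \<le> supnorm s f"
    using supge[OF zero_in[of s]] s0 s0T assms(1) by (meson norm_ge_zero order.trans less_imp_le le_add_same_cancel1 )
  ultimately have "(supnorm s f)\<^sup>2 \<le> (sqrt (Ma * Mc))\<^sup>2" by (intro power_mono) auto
  also have "\<dots> = Ma * Mc" using Ma0 Mc0 by simp
  finally show ?thesis by (simp add: Ma_def Mc_def a_def T_def)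
qed


end
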